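(* Let $M=(S,\mathrm{Act},P)$ be an MDP, $T\subseteq S$, $\mathrm{opt}\in\{\min,\max\}$, $r$ the least fixed point of $\tilde D^{\mathrm{opt}}$, $Z=\{s\in S\mid\Pr^{\mathrm{opt}}_s(\Diamond T)=0\}$, and $\sigma$ a strategy with $\Pr^\sigma_s(\Diamond T)=\Pr^{\mathrm{opt}}_s(\Diamond T)$ for all $s\in S$. For $s\in S$ let $z(s)$ be the probability, in the Markov chain induced by $\sigma$ started at $s$, of the set of paths $s_0s_1\ldots$ for which there is $i$ with $s_i\in Z$ and $s_j\notin T$ for all $j<i$. Then for all $s\in S$: $r(s)<\infty$ implies $z(s)>0$.
   Context: An MDP is a tuple $M=(S,\mathrm{Act},P)$ with $S$ finite, $\mathrm{Act}$ finite, $P\colon S\times\mathrm{Act}\times S\to[0,1]$ with $\sum_{s'}P(s,a,s')\in\{0,1\}$; $\mathrm{Act}(s)=\{a\mid\sum_{s'}P(s,a,s')=1\}$ is nonempty for all $s$; $\mathrm{Post}(s,a)=\{s'\mid P(s,a,s')>0\}$. A strategy is $\sigma\colon S\to\mathrm{Act}$ with $\sigma(s)\in\mathrm{Act}(s)$, inducing a Markov chain with transitions $P(s,\sigma(s),\cdot)$; $\Pr^\sigma_s(\Diamond T)$ is the probability of visiting $T$ from $s$ and $\Pr^{\mathrm{opt}}_s(\Diamond T)=\mathrm{opt}_\sigma\Pr^\sigma_s(\Diamond T)$. $\mathbb{N}_\infty=\mathbb{N}\cup\{\infty\}$ with $\infty+1=\infty$. $\tilde D^{\mathrm{opt}}(r)(s)=\infty$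 for $s\in T$ and $\mathrm{opt}_{a\in\mathrm{Act}(s)}\big(\min_{s'\in\mathrm{Post}(s,a)}r(s')+[\exists u,v\in\mathrm{Post}(s,a)\colon r(u)\ne r(v)]\big)$ for $s\notin T$ ($[\varphi]\in\{0,1\}$ the Iverson bracket); its least fixed point w.r.t. the pointwise order exists. *)

theory Defs
  imports Complex_Main "HOL-Library.Extended_Nat"
begin

definition Act :: "('s::finite \<Rightarrow> 'act::finite \<Rightarrow> 's \<Rightarrow> real) \<Rightarrow> 's \<Rightarrow> 'act set" where
  "Act P s = {a. (\<Sum>t\<in>UNIV. P s a t) = 1}"

definition Post :: "('s::finite \<Rightarrow> 'act::finite \<Rightarrow> 's \<Rightarrow> real) \<Rightarrow> 's \<Rightarrow> 'act \<Rightarrow> 's set" where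
  "Post P s a = {t. P s a t > 0}"

definition is_mdp :: "('s::finite \<Rightarrow> 'act::finite \<Rightarrow> 's \<Rightarrow> real) \<Rightarrow> bool" where
  "is_mdp P \<longleftrightarrow> (\<forall>s a t. 0 \<le> P s a t \<and> P s a t \<le> 1)
     \<and> (\<forall>s a. (\<Sum>t\<in>UNIV. P s a t) \<in> {0, 1})
     \<and> (\<forall>s. Act P s \<noteq> {})"

definition is_strategy :: "('s::finite \<Rightarrow> 'act::finite \<Rightarrow> 's \<Rightarrow> real) \<Rightarrow> ('s \<Rightarrow> 'act) \<Rightarrow> bool" where
  "is_strategy P \<sigma> \<longleftrightarrow> (\<forall>s. \<sigma> s \<in> Act P s)"

text \<open>Probability, in the Markov chain induced by \<sigma>, of the paths from s that
  visit B within at most n steps while all earlier states lie in A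
  (constrained/bounded reachability).\<close>

fun until_n :: "('s::finite \<Rightarrow> 'act::finite \<Rightarrow> 's \<Rightarrow> real) \<Rightarrow> ('s \<Rightarrow> 'act) \<Rightarrow> 's set \<Rightarrow> 's set \<Rightarrow> nat \<Rightarrow> 's \<Rightarrow> real" where
  "until_n P \<sigma> A B 0 s = (if s \<in> B then 1 else 0)"
| "until_n P \<sigma> A B (Suc n) s =
     (if s \<in> B then 1 else if s \<notin> A then 0
      else (\<Sum>t\<in>UNIV. P s (\<sigma> s) t * until_n P \<sigma> A B n t))"

text \<open>Unbounded version: probability of the (increasing) union of the bounded
  events, i.e. the supremum of the bounded probabilities.\<close>

definition until_prob :: "('s::finite \<Rightarrow> 'act::finite \<Rightarrow> 's \<Rightarrow> real) \<Rightarrow> ('s \<Rightarrow> 'act) \<Rightarrow> 's set \<Rightarrow> 's set \<Rightarrow> 's \<Rightarrow> real" where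
  "until_prob P \<sigma> A B s = (SUP n. until_n P \<sigma> A B n s)"

definition reach_prob :: "('s::finite \<Rightarrow> 'act::finite \<Rightarrow> 's \<Rightarrow> real) \<Rightarrow> ('s \<Rightarrow> 'act) \<Rightarrow> 's set \<Rightarrow> 's \<Rightarrow> real" where
  "reach_prob P \<sigma> T s = until_prob P \<sigma> UNIV T s"

datatype opt = OptMin | OptMax

text \<open>Pr^opt_s(\<diamond>T) (finitely many memoryless deterministic strategies)\<close>
definition opt_reach_prob :: "('s::finite \<Rightarrow> 'act::finite \<Rightarrow> 's \<Rightarrow> real) \<Rightarrow> opt \<Rightarrow> 's set \<Rightarrow> 's \<Rightarrow> real" where
  "opt_reach_prob P o' T s =
     (case o' of
        OptMin \<Rightarrow> (INF \<sigma>\<in>{\<sigma>. is_strategy P \<sigma>}. reach_prob P \<sigma> T s)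
      | OptMax \<Rightarrow> (SUP \<sigma>\<in>{\<sigma>. is_strategy P \<sigma>}. reach_prob P \<sigma> T s))"

definition opt_enat :: "opt \<Rightarrow> enat set \<Rightarrow> enat" where
  "opt_enat o' X = (case o' of OptMin \<Rightarrow> Min X | OptMax \<Rightarrow> Max X)"

definition Dtilde :: "('s::finite \<Rightarrow> 'act::finite \<Rightarrow> 's \<Rightarrow> real) \<Rightarrow> 's set \<Rightarrow> opt \<Rightarrow> ('s \<Rightarrow> enat) \<Rightarrow> ('s \<Rightarrow> enat)" where
  "Dtilde P T o' r s =
     (if s \<in> T then \<infinity>
      else opt_enat o' ((\<lambda>a. Min (r ` Post P s a)
               + (if \<exists>u\<in>Post P s a. \<exists>v\<in>Post P s a. r u \<noteq> r v then 1 else 0)) ` Act P s))"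

end

theory Submission
  imports Defs
begin

lemma row_sum: "a \<in> Act P s \<Longrightarrow> (\<Sum>t\<in>UNIV. P s a t) = 1"
  by (simp add: Act_def)

lemma P_nn: "is_mdp P \<Longrightarrow> 0 \<le> P s a t"
  by (simp add: is_mdp_def)

lemma P_le1: "is_mdp P \<Longrightarrow> P s a t \<le> 1"
  by (simp add: is_mdp_def)

lemma until_bounds:
  assumes mdp: "is_mdp P" and str: "is_strategy P \<tau>"
  shows "0 \<le> until_n P \<tau> A B n t \<and> until_n P \<tau> A B n t \<le> 1"
proof (induction n arbitrary: t)
  case 0
  then show ?case by simp
next
  case (Suc n)
  have r: "(\<Sum>x\<in>UNIV. P t (\<tau> t) x) = 1"
    using str row_sum unfolding is_strategy_def by blast
  have "(\<Sum>x\<in>UNIV. P t (\<tau> t) x * until_n P \<tau> A B n x) \<ge> 0"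
    by (intro sum_nonneg mult_nonneg_nonneg P_nn[OF mdp]) (use Suc in auto)
  moreover have "(\<Sum>x\<in>UNIV. P t (\<tau> t) x * until_n P \<tau> A B n x) \<le> (\<Sum>x\<in>UNIV. P t (\<tau> t) x)"
    by (intro sum_mono mult_left_le P_nn[OF mdp]) (use Suc in auto)
  ultimately show ?case using r by simp
qed

lemma until_mono_Suc:
  assumes mdp: "is_mdp P" and str: "is_strategy P \<tau>"
  shows "until_n P \<tau> A B n t \<le> until_n P \<tau> A B (Suc n) t"
proof (induction n arbitrary: t)
  case 0
  then show ?case using until_bounds[OF mdp str, of A B "Suc 0" t] by auto
next
  case (Suc n)
  have "(\<Sum>x\<in>UNIV. P t (\<tau> t) x * until_n P \<tau> A B n x) \<le> (\<Sum>x\<in>UNIV. P t (\<tau> t) x * until_n P \<tau> A B (Suc n) x)"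
    by (intro sum_mono mult_left_mono P_nn[OF mdp] Suc)
  then show ?case by simp
qed

lemma until_mono:
  assumes mdp: "is_mdp P" and str: "is_strategy P \<tau>" and "n \<le> m"
  shows "until_n P \<tau> A B n t \<le> until_n P \<tau> A B m t"
  using lift_Suc_mono_le[of "\<lambda>n. until_n P \<tau> A B n t", OF until_mono_Suc[OF mdp str] assms(3)] .

lemma bdd_until:
  assumes mdp: "is_mdp P" and str: "is_strategy P \<tau>"
  shows "bdd_above (range (\<lambda>n. until_n P \<tau> A B n t))"
  using until_bounds[OF mdp str] by (intro bdd_aboveI[of _ 1]) auto

lemma until_le_prob:
  assumes mdp: "is_mdp P" and str: "is_strategy P \<tau>"
  shows "until_n P \<tau> A B n t \<le> until_prob P \<tau> A B t"
  unfolding until_prob_def by (rule cSUP_upper[OF _ bdd_until[OF mdp str]]) auto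

lemma prob_le:
  assumes "\<And>n. until_n P \<tau> A B n t \<le> c"
  shows "until_prob P \<tau> A B t \<le> c"
  unfolding until_prob_def by (rule cSUP_least) (use assms in auto)

lemma prob_nn:
  assumes mdp: "is_mdp P" and str: "is_strategy P \<tau>"
  shows "0 \<le> until_prob P \<tau> A B t"
  using until_le_prob[OF mdp str, of A B 0 t] until_bounds[OF mdp str, of A B 0 t] by linarith


lemma good_step:
  assumes mdp: "is_mdp P" and str: "is_strategy P \<tau>"
    and tT: "t \<notin> T" and pos: "P t (\<tau> t) t1 > 0"
    and p: "p > 0" and g: "\<forall>n. until_n P \<tau> UNIV T n t1 \<le> 1 - p"
  shows "\<exists>p>0. \<forall>n. until_n P \<tau> UNIV T n t \<le> 1 - p"
proof -
  let ?\<pi> = "P t (\<tau> t) t1"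
  have p1: "p \<le> 1" using spec[OF g, of 0] until_bounds[OF mdp str, of UNIV T 0 t1] by linarith
  have pi1: "?\<pi> \<le> 1" using P_le1[OF mdp] .
  have r: "(\<Sum>x\<in>UNIV. P t (\<tau> t) x) = 1"
    using str row_sum unfolding is_strategy_def by blast
  have "until_n P \<tau> UNIV T n t \<le> 1 - ?\<pi> * p" for n
  proof (cases n)
    case 0
    then show ?thesis using tT p1 pi1 p pos by (simp add: mult_le_one)
  next
    case (Suc m)
    have "(\<Sum>x\<in>UNIV. P t (\<tau> t) x * until_n P \<tau> UNIV T m x)
        \<le> (\<Sum>x\<in>UNIV. P t (\<tau> t) x * (if x = t1 then 1 - p else 1))"
      by (intro sum_mono mult_left_mono P_nn[OF mdp]) (use g until_bounds[OF mdp str] in auto)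
    also have "\<dots> = (\<Sum>x\<in>UNIV. P t (\<tau> t) x - (if x = t1 then P t (\<tau> t) x * p else 0))"
      by (intro sum.cong) (auto simp: algebra_simps)
    also have "\<dots> = 1 - ?\<pi> * p"
      by (simp add: sum_subtractf r)
    finally show ?thesis using Suc tT by simp
  qed
  then show ?thesis using p pos by (intro exI[of _ "?\<pi> * p"]) auto
qed

lemma closed_zero:
  assumes mdp: "is_mdp P" and C: "\<forall>x\<in>C. x \<notin> T \<and> (\<forall>y. P x (\<tau> x) y > 0 \<longrightarrow> y \<in> C)"
  shows "x \<in> C \<Longrightarrow> until_n P \<tau> UNIV T n x = 0"
proof (induction n arbitrary: x)
  case 0
  then show ?case using C by auto
next
  case (Suc n)
  have "(\<Sum>y\<in>UNIV. P x (\<tau> x) y * until_n P \<tau> UNIV T n y) = 0"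
  proof (intro sum.neutral ballI)
    fix y
    show "P x (\<tau> x) y * until_n P \<tau> UNIV T n y = 0"
    proof (cases "P x (\<tau> x) y > 0")
      case True
      then show ?thesis using Suc C by auto
    next
      case False
      then have "P x (\<tau> x) y = 0" using P_nn[OF mdp, of x "\<tau> x" y] by linarith
      then show ?thesis by simp
    qed
  qed
  then show ?case using Suc C by auto
qed

lemma good_lemma:
  fixes u :: "'s::finite \<Rightarrow> enat" and P :: "'s \<Rightarrow> 'act::finite \<Rightarrow> 's \<Rightarrow> real"
  assumes mdp: "is_mdp P" and str: "is_strategy P \<tau>"
    and H: "\<And>t. u t < \<infinity> \<Longrightarrow> t \<notin> T \<and> Min (u ` Post P t (\<tau> t)) +
        (if \<exists>x\<in>Post P t (\<tau> t). \<exists>y\<in>Post P t (\<tau> t). u x \<noteq> u y then 1 else 0) \<le> u t"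
  shows "u t < \<infinity> \<Longrightarrow> \<exists>p>0. \<forall>n. until_n P \<tau> UNIV T n t \<le> 1 - p"
proof (induction "the_enat (u t)" arbitrary: t rule: less_induct)
  case less
  define E where "E = {(a,b). P a (\<tau> a) b > 0 \<and> u a < \<infinity>}"
  have propg: "(a,b) \<in> E\<^sup>* \<Longrightarrow> \<exists>p>0. \<forall>n. until_n P \<tau> UNIV T n b \<le> 1 - p \<Longrightarrow>
      \<exists>p>0. \<forall>n. until_n P \<tau> UNIV T n a \<le> 1 - p" for a b
  proof (induction rule: converse_rtrancl_induct)
    case base
    then show ?case by simp
  next
    case (step y z)
    then obtain p where "p > 0" "\<forall>n. until_n P \<tau> UNIV T n z \<le> 1 - p" using step by blast
    have yz: "P y (\<tau> y) z > 0" "u y < \<infinity>" using step(1) unfolding E_def unfolding E_def by auto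
    have "y \<notin> T" using conjunct1[OF H[OF yz(2)]] .
    moreover note yz(1)
    ultimately show ?case by (rule good_step[OF mdp str]) fact+
  qed
  show ?case
  proof (cases "\<exists>t'. (t,t') \<in> E\<^sup>* \<and> u t' < u t")
    case True
    then obtain t' where t': "(t,t') \<in> E\<^sup>*" "u t' < u t" by blast
    have "the_enat (u t') < the_enat (u t)" "u t' < \<infinity>"
      using t'(2) less.prems by (auto simp: less_enat_def split: enat.splits)
    then have "\<exists>p>0. \<forall>n. until_n P \<tau> UNIV T n t' \<le> 1 - p" by (rule less.hyps)
    then show ?thesis by (rule propg[OF t'(1)])
  next
    case False
    have eq: "(t,t') \<in> E\<^sup>* \<Longrightarrow> u t' = u t" for t'
    proof (induction rule: rtrancl_induct)
      case base
      then show ?case by simp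
    next
      case (step y z)
      let ?Q = "Post P y (\<tau> y)"
      have fin: "u y < \<infinity>" using step by (simp add: E_def)
      have zQ: "z \<in> ?Q" using step(2) by (simp add: E_def Post_def)
      have geq: "w \<in> ?Q \<Longrightarrow> u t \<le> u w" for w
      proof -
        assume "w \<in> ?Q"
        then have "(y,w) \<in> E" using fin by (simp add: E_def Post_def)
        then have "(t,w) \<in> E\<^sup>*" using step(1) by simp
        show ?thesis
        proof (rule ccontr)
          assume "\<not> u t \<le> u w"
          then have "u w < u t" by simp
          then show False using False \<open>(t,w) \<in> E\<^sup>*\<close> by metis
        qed
      qed
      have finQ: "finite ?Q" "?Q \<noteq> {}" using zQ by auto
      have Mge: "u t \<le> Min (u ` ?Q)" using geq finQ by (simp add: Min_ge_iff)
      have Hy: "Min (u ` ?Q) + (if \<exists>x\<in>?Q. \<exists>y\<in>?Q. u x \<noteq> u y then 1 else 0) \<le> u t"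
        using H[OF fin] step(3) by simp
      have ut: "u t < \<infinity>" using less.prems .
      have nb: "\<not> (\<exists>x\<in>?Q. \<exists>y\<in>?Q. u x \<noteq> u y)"
      proof
        assume "\<exists>x\<in>?Q. \<exists>y\<in>?Q. u x \<noteq> u y"
        then have "Min (u ` ?Q) + 1 \<le> u t" using Hy by simp
        then have "u t + 1 \<le> u t" using Mge by (meson add_right_mono order_trans)
        then show False using ut by (cases "u t") auto
      qed
      have "Min (u ` ?Q) \<in> u ` ?Q" using finQ by simp
      then obtain w where w: "w \<in> ?Q" "Min (u ` ?Q) = u w" by auto
      have "u z = u w" by (metis nb w(1) zQ)
      moreover have "Min (u ` ?Q) \<le> u t" using Hy unfolding if_not_P[OF nb] by simp
      ultimately show ?case using Mge w by simp
    qed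
    define C where "C = {t'. (t,t') \<in> E\<^sup>*}"
    have "\<forall>x\<in>C. x \<notin> T \<and> (\<forall>y. P x (\<tau> x) y > 0 \<longrightarrow> y \<in> C)"
    proof (intro ballI conjI allI impI)
      fix x assume x: "x \<in> C"
      then have "(t,x) \<in> E\<^sup>*" by (simp add: C_def)
      then have ux: "u x < \<infinity>" using eq[of x] less.prems by simp
      show "x \<notin> T" using conjunct1[OF H[OF ux]] .
      fix y assume "P x (\<tau> x) y > 0"
      then have "(x,y) \<in> E" using ux by (simp add: E_def)
      then show "y \<in> C" using x by (simp add: C_def)
    qed
    note cl = this
    have "until_n P \<tau> UNIV T n t = 0" for n
      by (rule closed_zero[OF mdp cl]) (simp add: C_def)
    then show ?thesis by (intro exI[of _ 1]) auto
  qed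
qed

lemma W1:
  fixes P :: "'s::finite \<Rightarrow> 'act::finite \<Rightarrow> 's \<Rightarrow> real"
  assumes mdp: "is_mdp P" and str: "is_strategy P \<sigma>"
    and hZ: "\<And>t. t \<notin> Z \<Longrightarrow> reach_prob P \<sigma> T t > 0"
    and sW: "until_prob P \<sigma> (-T) Z s = 0"
  shows "reach_prob P \<sigma> T s \<ge> 1"
proof -
  define W where "W = {t. until_prob P \<sigma> (-T) Z t = 0}"
  define R where "R n t = until_n P \<sigma> UNIV T n t" for n t
  have R01: "0 \<le> R n t" "R n t \<le> 1" for n t
    using until_bounds[OF mdp str] by (auto simp: R_def)
  have RT: "t \<in> T \<Longrightarrow> R n t = 1" for n t by (cases n) (simp_all add: R_def)
  have RSuc: "t \<notin> T \<Longrightarrow> R (Suc n) t = (\<Sum>x\<in>UNIV. P t (\<sigma> t) x * R n x)" for n t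
    by (simp add: R_def)
  have R0: "t \<notin> T \<Longrightarrow> R 0 t = 0" for t by (simp add: R_def)
  have rs: "(\<Sum>x\<in>UNIV. P t (\<sigma> t) x) = 1" for t
    using str row_sum unfolding is_strategy_def by blast
  have notZ: "t \<in> W \<Longrightarrow> t \<notin> Z" for t
  proof
    assume "t \<in> W" "t \<in> Z"
    then have "until_n P \<sigma> (-T) Z 0 t = 1" by simp
    then show False using until_le_prob[OF mdp str, of "-T" Z 0 t] \<open>t \<in> W\<close> by (simp add: W_def)
  qed
  have closed: "t' \<in> W" if tW: "t \<in> W" and tT: "t \<notin> T" and pos: "P t (\<sigma> t) t' > 0" for t t'
  proof -
    have tZ: "t \<notin> Z" using notZ tW .
    have "until_n P \<sigma> (-T) Z n t' = 0" for n
    proof -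
      have "until_n P \<sigma> (-T) Z (Suc n) t \<le> 0"
        using until_le_prob[OF mdp str, of "-T" Z "Suc n" t] tW by (simp add: W_def)
      then have "until_n P \<sigma> (-T) Z (Suc n) t = 0"
        using until_bounds[OF mdp str, of "-T" Z "Suc n" t] by linarith
      then have "(\<Sum>x\<in>UNIV. P t (\<sigma> t) x * until_n P \<sigma> (-T) Z n x) = 0"
        using tZ tT by simp
      moreover have "\<And>x. 0 \<le> P t (\<sigma> t) x * until_n P \<sigma> (-T) Z n x"
        using until_bounds[OF mdp str] P_nn[OF mdp] by (simp add: mult_nonneg_nonneg)
      ultimately have "\<forall>x\<in>UNIV. P t (\<sigma> t) x * until_n P \<sigma> (-T) Z n x = 0"
        using sum_nonneg_eq_0_iff[of UNIV "\<lambda>x. P t (\<sigma> t) x * until_n P \<sigma> (-T) Z n x"] by simp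
      then have "P t (\<sigma> t) t' * until_n P \<sigma> (-T) Z n t' = 0" by blast
      then show ?thesis using pos by simp
    qed
    then have "until_prob P \<sigma> (-T) Z t' \<le> 0" by (intro prob_le) simp
    then show ?thesis using prob_nn[OF mdp str, of "-T" Z t'] by (simp add: W_def)
  qed
  have pos: "\<exists>n. R n t > 0" if tW: "t \<in> W" for t
  proof (rule ccontr)
    assume "\<not> (\<exists>n. R n t > 0)"
    then have "\<And>n. until_n P \<sigma> UNIV T n t \<le> 0" by (simp add: R_def not_less)
    then have "reach_prob P \<sigma> T t \<le> 0" unfolding reach_prob_def by (rule prob_le)
    then show False using hZ[OF notZ[OF tW]] by simp
  qed
  then obtain nn where nn: "\<forall>t\<in>W. R (nn t) t > 0" by metis
  have finW: "finite W" by simp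
  have sWW: "s \<in> W" using sW by (simp add: W_def)
  define N where "N = Max (nn ` W)"
  have RN: "R N t > 0" if "t \<in> W" for t
  proof -
    have "nn t \<le> N" unfolding N_def using finW that by simp
    then have "R (nn t) t \<le> R N t" unfolding R_def by (rule until_mono[OF mdp str])
    then show ?thesis using nn that by force
  qed
  define \<delta> where "\<delta> = Min ((\<lambda>t. R N t) ` W)"
  have \<delta>pos: "\<delta> > 0" unfolding \<delta>_def by (subst Min_gr_iff) (use finW sWW RN in auto)
  have \<delta>le: "\<delta> \<le> R N t" if "t \<in> W" for t unfolding \<delta>_def using finW that by simp
  have \<delta>1: "\<delta> \<le> 1" using \<delta>le[OF sWW] R01(2)[of N s] by linarith
  have key: "\<forall>t\<in>W. 1 - R (a + b) t \<le> (1 - R a t) * M"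
    if Mb: "\<forall>t\<in>W. 1 - R b t \<le> M" and M0: "0 \<le> M" for a b M
  proof (induction a)
    case 0
    show ?case
    proof
      fix t assume tW: "t \<in> W"
      show "1 - R (0 + b) t \<le> (1 - R 0 t) * M"
      proof (cases "t \<in> T")
        case True then show ?thesis by (simp add: RT)
      next
        case False then show ?thesis using Mb tW by (simp add: R0)
      qed
    qed
  next
    case (Suc a)
    show ?case
    proof
      fix t assume tW: "t \<in> W"
      show "1 - R (Suc a + b) t \<le> (1 - R (Suc a) t) * M"
      proof (cases "t \<in> T")
        case True then show ?thesis by (simp add: RT)
      next
        case False
        have "1 - R (Suc a + b) t = (\<Sum>x\<in>UNIV. P t (\<sigma> t) x) - (\<Sum>x\<in>UNIV. P t (\<sigma> t) x * R (a + b) x)"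
          using False rs by (simp add: RSuc)
        also have "\<dots> = (\<Sum>x\<in>UNIV. P t (\<sigma> t) x * (1 - R (a + b) x))"
          by (simp add: sum_subtractf algebra_simps)
        also have "\<dots> \<le> (\<Sum>x\<in>UNIV. P t (\<sigma> t) x * ((1 - R a x) * M))"
        proof (rule sum_mono)
          fix x
          show "P t (\<sigma> t) x * (1 - R (a + b) x) \<le> P t (\<sigma> t) x * ((1 - R a x) * M)"
          proof (cases "P t (\<sigma> t) x > 0")
            case True
            then have "x \<in> W" using closed tW False by blast
            then show ?thesis using Suc.IH True by (intro mult_left_mono) auto
          next
            case False
            then have "P t (\<sigma> t) x = 0" using P_nn[OF mdp, of t "\<sigma> t" x] by linarith
            then show ?thesis by simp
          qed
        qed
        also have "\<dots> = (\<Sum>x\<in>UNIV. P t (\<sigma> t) x * (1 - R a x)) * M"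
          by (simp add: sum_distrib_right mult.assoc)
        also have "\<dots> = ((\<Sum>x\<in>UNIV. P t (\<sigma> t) x) - (\<Sum>x\<in>UNIV. P t (\<sigma> t) x * R a x)) * M"
          by (simp add: sum_subtractf right_diff_distrib)
        also have "\<dots> = (1 - R (Suc a) t) * M"
          using False rs by (simp add: RSuc)
        finally show ?thesis .
      qed
    qed
  qed
  have powb: "\<forall>t\<in>W. 1 - R (k * N) t \<le> (1 - \<delta>) ^ k" for k
  proof (induction k)
    case 0
    then show ?case using R01 by simp
  next
    case (Suc k)
    have M0: "0 \<le> (1 - \<delta>) ^ k" using \<delta>1 by simp
    show ?case
    proof
      fix t assume tW: "t \<in> W"
      have "1 - R (Suc k * N) t = 1 - R (N + k * N) t" by simp
      also have "\<dots> \<le> (1 - R N t) * (1 - \<delta>) ^ k"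
        using key[OF Suc.IH M0, of N] tW by blast
      also have "\<dots> \<le> (1 - \<delta>) * (1 - \<delta>) ^ k"
        using \<delta>le[OF tW] M0 by (intro mult_right_mono) auto
      finally show "1 - R (Suc k * N) t \<le> (1 - \<delta>) ^ Suc k" by simp
    qed
  qed
  show ?thesis
  proof (rule ccontr)
    assume "\<not> 1 \<le> reach_prob P \<sigma> T s"
    then have "1 - reach_prob P \<sigma> T s > 0" by simp
    moreover have "1 - \<delta> < 1" using \<delta>pos by simp
    ultimately obtain k where k: "(1 - \<delta>) ^ k < 1 - reach_prob P \<sigma> T s"
      using real_arch_pow_inv by blast
    have "R (k * N) s \<le> reach_prob P \<sigma> T s"
      unfolding R_def reach_prob_def by (rule until_le_prob[OF mdp str])
    then show False using powb[of k] sWW k by force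
  qed
qed

theorem lemma10:
  fixes P :: "'s::finite \<Rightarrow> 'act::finite \<Rightarrow> 's \<Rightarrow> real"
    and T :: "'s set" and o' :: opt and \<sigma> :: "'s \<Rightarrow> 'act" and s :: 's
  assumes "is_mdp P"
    and "is_strategy P \<sigma>"
    and "\<forall>s. reach_prob P \<sigma> T s = opt_reach_prob P o' T s"
    and "r = lfp (Dtilde P T o')"
    and "Z = {s. opt_reach_prob P o' T s = 0}"
    and "r s < \<infinity>"
  shows "until_prob P \<sigma> (- T) Z s > 0"
proof (rule ccontr)
  note mdp = assms(1) and str = assms(2)
  assume "\<not> until_prob P \<sigma> (- T) Z s > 0"
  then have sW: "until_prob P \<sigma> (- T) Z s = 0"
    using prob_nn[OF mdp str, of "-T" Z s] by linarith
  have hZ: "reach_prob P \<sigma> T t > 0" if "t \<notin> Z" for t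
  proof -
    have "reach_prob P \<sigma> T t \<noteq> 0" using that assms(3,5) by simp
    moreover have "reach_prob P \<sigma> T t \<ge> 0" unfolding reach_prob_def by (rule prob_nn[OF mdp str])
    ultimately show ?thesis by linarith
  qed
  have one: "reach_prob P \<sigma> T s \<ge> 1" by (rule W1[OF mdp str hZ sW])
  have all_inf: "u s = \<infinity>" if Du: "Dtilde P T o' u \<le> u" for u
  proof (rule ccontr)
    assume "u s \<noteq> \<infinity>"
    then have us: "u s < \<infinity>" using enat_ord_simps(4) by blast
    define f where "f = (\<lambda>t a. Min (u ` Post P t a) +
        (if \<exists>x\<in>Post P t a. \<exists>y\<in>Post P t a. u x \<noteq> u y then 1 else 0))"
    have DT: "t \<notin> T" if "u t < \<infinity>" for t
    proof
      assume "t \<in> T"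
      then have "Dtilde P T o' u t = \<infinity>" by (simp add: Dtilde_def)
      then show False using le_funD[OF Du, of t] that by simp
    qed
    have Dt: "Dtilde P T o' u t = opt_enat o' (f t ` Act P t)" if "t \<notin> T" for t
      using that by (simp add: Dtilde_def f_def)
    have finA: "finite (f t ` Act P t)" for t by simp
    have neA: "f t ` Act P t \<noteq> {}" for t using mdp by (simp add: is_mdp_def)
    obtain \<tau> where \<tau>str: "is_strategy P \<tau>" and \<tau>H: "\<And>t. u t < \<infinity> \<Longrightarrow> f t (\<tau> t) \<le> u t"
      and \<tau>rel: "reach_prob P \<sigma> T s \<le> reach_prob P \<tau> T s"
    proof (cases o')
      case OptMin
      have ex: "\<exists>a. a \<in> Act P t \<and> f t a \<le> u t" if "u t < \<infinity>" for t
      proof -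
        have "Min (f t ` Act P t) \<in> f t ` Act P t" using finA neA by (rule Min_in)
        then obtain a where a: "a \<in> Act P t" "f t a = Min (f t ` Act P t)" by auto
        have "Min (f t ` Act P t) \<le> u t"
          using le_funD[OF Du, of t] Dt[OF DT[OF that]] OptMin by (simp add: opt_enat_def)
        then show ?thesis using a by auto
      qed
      define \<tau> where "\<tau> = (\<lambda>t. if u t < \<infinity> then (SOME a. a \<in> Act P t \<and> f t a \<le> u t) else \<sigma> t)"
      have prop1: "\<tau> t \<in> Act P t \<and> (u t < \<infinity> \<longrightarrow> f t (\<tau> t) \<le> u t)" for t
      proof (cases "u t < \<infinity>")
        case True
        then show ?thesis unfolding \<tau>_def using someI_ex[OF ex[OF True]] by simp
      next
        case False
        then show ?thesis unfolding \<tau>_def using str by (simp add: is_strategy_def)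
      qed
      have ts: "is_strategy P \<tau>" using prop1 by (simp add: is_strategy_def)
      have "opt_reach_prob P o' T s \<le> reach_prob P \<tau> T s"
        unfolding opt_reach_prob_def OptMin opt.case
      proof (rule cINF_lower)
        show "bdd_below ((\<lambda>\<sigma>. reach_prob P \<sigma> T s) ` {\<sigma>. is_strategy P \<sigma>})"
          by (rule bdd_belowI[of _ 0]) (auto simp: reach_prob_def intro: prob_nn[OF mdp])
        show "\<tau> \<in> {\<sigma>. is_strategy P \<sigma>}" using ts by simp
      qed
      then have "reach_prob P \<sigma> T s \<le> reach_prob P \<tau> T s" using assms(3) by simp
      then show ?thesis using that ts prop1 by blast
    next
      case OptMax
      have "f t (\<sigma> t) \<le> u t" if "u t < \<infinity>" for t
      proof -
        have "f t (\<sigma> t) \<le> Max (f t ` Act P t)"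
          using finA str by (simp add: is_strategy_def)
        also have "\<dots> \<le> u t"
          using le_funD[OF Du, of t] Dt[OF DT[OF that]] OptMax by (simp add: opt_enat_def)
        finally show ?thesis .
      qed
      then show ?thesis using that[of \<sigma>] str by simp
    qed
    have H: "t \<notin> T \<and> Min (u ` Post P t (\<tau> t)) +
        (if \<exists>x\<in>Post P t (\<tau> t). \<exists>y\<in>Post P t (\<tau> t). u x \<noteq> u y then 1 else 0) \<le> u t"
      if "u t < \<infinity>" for t
      using DT[OF that] \<tau>H[OF that] by (simp add: f_def)
    obtain p where p: "p > 0" "\<forall>n. until_n P \<tau> UNIV T n s \<le> 1 - p"
      using good_lemma[OF mdp \<tau>str H us] by blast
    have "reach_prob P \<tau> T s \<le> 1 - p" unfolding reach_prob_def
      by (rule prob_le) (use p in blast)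
    then show False using one \<tau>rel p by linarith
  qed
  have "r s = (INF u\<in>{u. Dtilde P T o' u \<le> u}. u s)"
    using assms(4) by (simp add: lfp_def Inf_apply)
  also have "\<dots> = \<infinity>"
  proof (rule order_antisym)
    show "(INF u\<in>{u. Dtilde P T o' u \<le> u}. u s) \<le> \<infinity>" by simp
    show "\<infinity> \<le> (INF u\<in>{u. Dtilde P T o' u \<le> u}. u s)"
      by (rule INF_greatest) (simp add: all_inf)
  qed
  finally show False using assms(6) by simp
qed

end
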